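(* Let $\hat\Pi_t=\hat\sigma_t(M_t)$, $t=0,\dots,T$, be an approximate information state with parameters $\epsilon_t,\delta_t,\lambda_t$. For $t=0,\dots,T$ let $L_{\hat V_{t+1}}$ be a Lipschitz constant of $\hat V_{t+1}$ (with $L_{\hat V_{T+1}}=0$), and define $\alpha_{T+1}:=0$ and $\alpha_t:=\max(\epsilon_t,\ \alpha_{t+1}+L_{\hat V_{t+1}}\delta_t)$. Then for all $t=0,\dots,T$, $m_t\in[[M_t]]$, $u_t\in[[U_t]]$: $$|Q_t(m_t,u_t)-\hat Q_t(\hat\sigma_t(m_t),u_t)|\le\alpha_t,\qquad |V_t(m_t)-\hat V_t(\hat\sigma_t(m_t))|\le\alpha_t.$$
   Context: Uncertain variables: fix a sample space $\Omega$; an uncertain variable with values in a set $\mathcal{X}$ is a map $X:\Omega\to\mathcal{X}$, with marginal range $[[X]]:=\{X(\omega):\omega\in\Omega\}$; uncertain variables are independent if their joint range is the product of their marginal ranges. Hausdorff distance: for nonempty subsets $\mathcal{A},\mathcal{B}$ of a metric space $(\mathcal{S},\eta)$, $\mathcal{H}(\mathcal{A},\mathcal{B}):=\max\{\sup_{a\in\mathcal{A}}\inf_{b\in\mathcal{B}}\eta(a,b),\sup_{b\in\mathcal{B}}\inf_{a\in\mathcal{A}}\eta(a,b)\}$. A function $f:\mathcal{X}\to\mathcal{Y}$ between metric spaces is $L$-invertible if there is $L_{f^{-1}}\ge0$ with $\mathcal{H}(f^{-1}(y^1),f^{-1}(y^2))\le L_{f^{-1}}\eta(y^1,y^2)$ for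 all $y^1,y^2$. System: horizon $T\in\mathbb{N}$. For $t=0,\dots,T$ there are independent disturbances $W_t\in\mathcal{W}_t$, actions $U_t\in\mathcal{U}_t$ taking values in a given set $[[U_t]]\subseteq\mathcal{U}_t$, observations $Y_0=h_0(W_0)$, $Y_{t+1}=h_{t+1}(W_{0:t},U_{0:t})$, and costs $C_t=d_t(W_{0:t},U_{0:t})\in\mathcal{C}_t\subset\mathbb{R}_{\ge0}$. Standing assumptions: $\mathcal{U}_t,\mathcal{W}_t,\mathcal{Y}_t$ are bounded subsets of a metric space $(\mathcal{S},\eta)$ (product spaces carry a metric also denoted $\eta$), the $\mathcal{C}_t$ are bounded subsets of $\mathbb{R}_{\ge0}$, each $h_t$ is Lipschitz and $L$-invertible, each $d_t$ is Lipschitz. The memory is $M_t=(Y_{0:t},U_{0:t-1})\in\mathcal{M}_t:=\prod_{\ell=0}^t\mathcal{Y}_\ell\times\prod_{\ell=0}^{t-1}\mathcal{U}_\ell$. Strategy-independent ranges: for $m_t=(y_{0:t},u_{0:t-1})$ let $\mathcal{W}(m_t)$ be the set of $w_{0:t}\in\prod_{\ell=0}^t[[W_\ell]]$ with $y_0=h_0(w_0)$ and $y_\ell=h_\ell(w_{0:\ell-1},u_{0:\ell-1})$ for $\ell=1,\dots,t$. Let $[[M_t]]$ be the set of such $m_t$ with $u_\ell\in[[U_\ell]]$ and $\mathcal{W}(m_t)\neq\emptyset$. For $m_t\in[[M_t]]$, $u_t\in[[U_t]]$: $[[C_t|m_t,u_t]]:=\{d_t(w_{0:t},u_{0:t}):w_{0:t}\in\mathcal{W}(m_t)\}$,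 $[[Y_{t+1}|m_t,u_t]]:=\{h_{t+1}(w_{0:t},u_{0:t}):w_{0:t}\in\mathcal{W}(m_t)\}$, $[[M_{t+1}|m_t,u_t]]:=\{(m_t,u_t,y_{t+1}):y_{t+1}\in[[Y_{t+1}|m_t,u_t]]\}$. For functions $\hat\sigma_t$ on $\mathcal{M}_t$ and $\hat\Pi_t=\hat\sigma_t(M_t)$: $[[\hat\Pi_t]]:=\hat\sigma_t([[M_t]])$, $[[M_t|\hat\pi_t]]:=\{m_t\in[[M_t]]:\hat\sigma_t(m_t)=\hat\pi_t\}$, $[[\hat\Pi_{t+1}|m_t,u_t]]:=\{\hat\sigma_{t+1}(m_{t+1}):m_{t+1}\in[[M_{t+1}|m_t,u_t]]\}$, and for $Z\in\{C_t,Y_{t+1},\hat\Pi_{t+1}\}$, $[[Z|\hat\pi_t,u_t]]:=\bigcup_{m_t\in[[M_t|\hat\pi_t]]}[[Z|m_t,u_t]]$. Memory-based DP: $V_{T+1}\equiv0$ and for $t=T,\dots,0$, $Q_t(m_t,u_t):=\max\{\sup_{c\in[[C_t|m_t,u_t]]}c,\ \sup_{m_{t+1}\in[[M_{t+1}|m_t,u_t]]}V_{t+1}(m_{t+1})\}$, $V_t(m_t):=\inf_{u_t\in[[U_t]]}Q_t(m_t,u_t)$. Approximate information state: $\hat\Pi_t=\hat\sigma_t(M_t)$ with $L$-invertible $\hat\sigma_t:\mathcal{M}_t\to\hat{\mathcal{P}}_t$, $\hat{\mathcal{P}}_t$ bounded with metric $\eta$, such that for each $t=0,\dots,T$ there are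 $\epsilon_t,\delta_t,\lambda_t\ge0$ with, for all $m_t\in[[M_t]]$, $u_t\in[[U_t]]$: (1) $|\sup_{c\in[[C_t|m_t,u_t]]}c-\sup_{c\in[[C_t|\hat\sigma_t(m_t),u_t]]}c|\le\epsilon_t$; (2) $\mathcal{H}([[\hat\Pi_{t+1}|m_t,u_t]],[[\hat\Pi_{t+1}|\hat\sigma_t(m_t),u_t]])\le\delta_t$; (3) for all $\hat\pi_t^1,\hat\pi_t^2\in[[\hat\Pi_t]]$, $\mathcal{H}([[\hat\Pi_{t+1}|\hat\pi_t^1,u_t]],[[\hat\Pi_{t+1}|\hat\pi_t^2,u_t]])\le\lambda_t\,\eta(\hat\pi_t^1,\hat\pi_t^2)$. Approximate DP: $\hat V_{T+1}\equiv0$ and for $t=T,\dots,0$, $\hat\pi_t\in[[\hat\Pi_t]]$, $u_t\in[[U_t]]$: $\hat Q_t(\hat\pi_t,u_t):=\max\{\sup_{c\in[[C_t|\hat\pi_t,u_t]]}c,\ \sup_{\hat\pi_{t+1}\in[[\hat\Pi_{t+1}|\hat\pi_t,u_t]]}\hat V_{t+1}(\hat\pi_{t+1})\}$, $\hat V_t(\hat\pi_t):=\inf_{u_t\in[[U_t]]}\hat Q_t(\hat\pi_t,u_t)$. (Each $\hat V_t$ is Lipschitz on $[[\hat\Pi_t]]$.) *)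

theory Defs
  imports "HOL-Analysis.Analysis"
begin

text \<open>Disturbance / action / observation histories are lists; element l of a list is the value at time l.
  Parameters:
    W  :: nat => 'w set      marginal range [[W_t]] of the disturbance W_t
    U  :: nat => 'u set      the given action set [[U_t]]
    h0 :: 'w => 'y           Y_0 = h_0(W_0)
    h  :: nat => 'w list => 'u list => 'y    Y_l = h l (w_0..w_(l-1)) (u_0..u_(l-1)), l >= 1
    d  :: nat => 'w list => 'u list => real  C_t = d t (w_0..w_t) (u_0..u_t)
  A memory m_t = (y_{0:t}, u_{0:t-1}) is a pair of lists of lengths t+1 and t.\<close>

type_synonym ('y, 'u) mem = "'y list \<times> 'u list"

definition hausdorff :: "'a::metric_space set \<Rightarrow> 'a set \<Rightarrow> real" where
  "hausdorff A B = max (SUP a\<in>A. infdist a B) (SUP b\<in>B. infdist b A)"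

definition Wm :: "(nat \<Rightarrow> 'w set) \<Rightarrow> ('w \<Rightarrow> 'y) \<Rightarrow> (nat \<Rightarrow> 'w list \<Rightarrow> 'u list \<Rightarrow> 'y)
    \<Rightarrow> ('y, 'u) mem \<Rightarrow> 'w list set" where
  "Wm W h0 h m = {w. length w = length (fst m) \<and> (\<forall>l<length w. w ! l \<in> W l)
      \<and> fst m ! 0 = h0 (w ! 0)
      \<and> (\<forall>l. 0 < l \<and> l < length w \<longrightarrow> fst m ! l = h l (take l w) (take l (snd m)))}"

definition Mrange :: "(nat \<Rightarrow> 'w set) \<Rightarrow> (nat \<Rightarrow> 'u set) \<Rightarrow> ('w \<Rightarrow> 'y)
    \<Rightarrow> (nat \<Rightarrow> 'w list \<Rightarrow> 'u list \<Rightarrow> 'y) \<Rightarrow> nat \<Rightarrow> ('y, 'u) mem set" where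
  "Mrange W U h0 h t = {m. length (fst m) = Suc t \<and> length (snd m) = t
      \<and> (\<forall>l<t. snd m ! l \<in> U l) \<and> Wm W h0 h m \<noteq> {}}"

definition Ccond :: "(nat \<Rightarrow> 'w set) \<Rightarrow> ('w \<Rightarrow> 'y) \<Rightarrow> (nat \<Rightarrow> 'w list \<Rightarrow> 'u list \<Rightarrow> 'y)
    \<Rightarrow> (nat \<Rightarrow> 'w list \<Rightarrow> 'u list \<Rightarrow> real) \<Rightarrow> nat \<Rightarrow> ('y, 'u) mem \<Rightarrow> 'u \<Rightarrow> real set" where
  "Ccond W h0 h d t m u = (\<lambda>w. d t w (snd m @ [u])) ` Wm W h0 h m"

definition Ycond :: "(nat \<Rightarrow> 'w set) \<Rightarrow> ('w \<Rightarrow> 'y) \<Rightarrow> (nat \<Rightarrow> 'w list \<Rightarrow> 'u list \<Rightarrow> 'y)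
    \<Rightarrow> nat \<Rightarrow> ('y, 'u) mem \<Rightarrow> 'u \<Rightarrow> 'y set" where
  "Ycond W h0 h t m u = (\<lambda>w. h (Suc t) w (snd m @ [u])) ` Wm W h0 h m"

definition Mnext :: "(nat \<Rightarrow> 'w set) \<Rightarrow> ('w \<Rightarrow> 'y) \<Rightarrow> (nat \<Rightarrow> 'w list \<Rightarrow> 'u list \<Rightarrow> 'y)
    \<Rightarrow> nat \<Rightarrow> ('y, 'u) mem \<Rightarrow> 'u \<Rightarrow> ('y, 'u) mem set" where
  "Mnext W h0 h t m u = (\<lambda>y. (fst m @ [y], snd m @ [u])) ` Ycond W h0 h t m u"

text \<open>Memory-based DP. Vk k is V_{T+1-k}.\<close>
primrec Vk :: "(nat \<Rightarrow> 'w set) \<Rightarrow> (nat \<Rightarrow> 'u set) \<Rightarrow> ('w \<Rightarrow> 'y)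
    \<Rightarrow> (nat \<Rightarrow> 'w list \<Rightarrow> 'u list \<Rightarrow> 'y) \<Rightarrow> (nat \<Rightarrow> 'w list \<Rightarrow> 'u list \<Rightarrow> real)
    \<Rightarrow> nat \<Rightarrow> nat \<Rightarrow> ('y, 'u) mem \<Rightarrow> real" where
  "Vk W U h0 h d T 0 = (\<lambda>m. 0)"
| "Vk W U h0 h d T (Suc k) = (\<lambda>m. INF u\<in>U (T - k).
      max (Sup (Ccond W h0 h d (T - k) m u)) (SUP m'\<in>Mnext W h0 h (T - k) m u. Vk W U h0 h d T k m'))"

definition Vfun :: "(nat \<Rightarrow> 'w set) \<Rightarrow> (nat \<Rightarrow> 'u set) \<Rightarrow> ('w \<Rightarrow> 'y)
    \<Rightarrow> (nat \<Rightarrow> 'w list \<Rightarrow> 'u list \<Rightarrow> 'y) \<Rightarrow> (nat \<Rightarrow> 'w list \<Rightarrow> 'u list \<Rightarrow> real)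
    \<Rightarrow> nat \<Rightarrow> nat \<Rightarrow> ('y, 'u) mem \<Rightarrow> real" where
  "Vfun W U h0 h d T t = Vk W U h0 h d T (Suc T - t)"

definition Qfun :: "(nat \<Rightarrow> 'w set) \<Rightarrow> (nat \<Rightarrow> 'u set) \<Rightarrow> ('w \<Rightarrow> 'y)
    \<Rightarrow> (nat \<Rightarrow> 'w list \<Rightarrow> 'u list \<Rightarrow> 'y) \<Rightarrow> (nat \<Rightarrow> 'w list \<Rightarrow> 'u list \<Rightarrow> real)
    \<Rightarrow> nat \<Rightarrow> nat \<Rightarrow> ('y, 'u) mem \<Rightarrow> 'u \<Rightarrow> real" where
  "Qfun W U h0 h d T t m u = max (Sup (Ccond W h0 h d t m u))
      (SUP m'\<in>Mnext W h0 h t m u. Vfun W U h0 h d T (Suc t) m')"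

definition Pirange :: "(nat \<Rightarrow> 'w set) \<Rightarrow> (nat \<Rightarrow> 'u set) \<Rightarrow> ('w \<Rightarrow> 'y)
    \<Rightarrow> (nat \<Rightarrow> 'w list \<Rightarrow> 'u list \<Rightarrow> 'y) \<Rightarrow> (nat \<Rightarrow> ('y, 'u) mem \<Rightarrow> 'p) \<Rightarrow> nat \<Rightarrow> 'p set" where
  "Pirange W U h0 h \<sigma> t = \<sigma> t ` Mrange W U h0 h t"

definition Mofpi :: "(nat \<Rightarrow> 'w set) \<Rightarrow> (nat \<Rightarrow> 'u set) \<Rightarrow> ('w \<Rightarrow> 'y)
    \<Rightarrow> (nat \<Rightarrow> 'w list \<Rightarrow> 'u list \<Rightarrow> 'y) \<Rightarrow> (nat \<Rightarrow> ('y, 'u) mem \<Rightarrow> 'p) \<Rightarrow> nat \<Rightarrow> 'p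
    \<Rightarrow> ('y, 'u) mem set" where
  "Mofpi W U h0 h \<sigma> t p = {m \<in> Mrange W U h0 h t. \<sigma> t m = p}"

definition Pinext :: "(nat \<Rightarrow> 'w set) \<Rightarrow> ('w \<Rightarrow> 'y) \<Rightarrow> (nat \<Rightarrow> 'w list \<Rightarrow> 'u list \<Rightarrow> 'y)
    \<Rightarrow> (nat \<Rightarrow> ('y, 'u) mem \<Rightarrow> 'p) \<Rightarrow> nat \<Rightarrow> ('y, 'u) mem \<Rightarrow> 'u \<Rightarrow> 'p set" where
  "Pinext W h0 h \<sigma> t m u = \<sigma> (Suc t) ` Mnext W h0 h t m u"

definition CcondPi :: "(nat \<Rightarrow> 'w set) \<Rightarrow> (nat \<Rightarrow> 'u set) \<Rightarrow> ('w \<Rightarrow> 'y)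
    \<Rightarrow> (nat \<Rightarrow> 'w list \<Rightarrow> 'u list \<Rightarrow> 'y) \<Rightarrow> (nat \<Rightarrow> 'w list \<Rightarrow> 'u list \<Rightarrow> real)
    \<Rightarrow> (nat \<Rightarrow> ('y, 'u) mem \<Rightarrow> 'p) \<Rightarrow> nat \<Rightarrow> 'p \<Rightarrow> 'u \<Rightarrow> real set" where
  "CcondPi W U h0 h d \<sigma> t p u = (\<Union>m\<in>Mofpi W U h0 h \<sigma> t p. Ccond W h0 h d t m u)"

definition PinextPi :: "(nat \<Rightarrow> 'w set) \<Rightarrow> (nat \<Rightarrow> 'u set) \<Rightarrow> ('w \<Rightarrow> 'y)
    \<Rightarrow> (nat \<Rightarrow> 'w list \<Rightarrow> 'u list \<Rightarrow> 'y)
    \<Rightarrow> (nat \<Rightarrow> ('y, 'u) mem \<Rightarrow> 'p) \<Rightarrow> nat \<Rightarrow> 'p \<Rightarrow> 'u \<Rightarrow> 'p set" where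
  "PinextPi W U h0 h \<sigma> t p u = (\<Union>m\<in>Mofpi W U h0 h \<sigma> t p. Pinext W h0 h \<sigma> t m u)"

text \<open>Approximate DP. Vhk k is hat V_{T+1-k}.\<close>
primrec Vhk :: "(nat \<Rightarrow> 'w set) \<Rightarrow> (nat \<Rightarrow> 'u set) \<Rightarrow> ('w \<Rightarrow> 'y)
    \<Rightarrow> (nat \<Rightarrow> 'w list \<Rightarrow> 'u list \<Rightarrow> 'y) \<Rightarrow> (nat \<Rightarrow> 'w list \<Rightarrow> 'u list \<Rightarrow> real)
    \<Rightarrow> (nat \<Rightarrow> ('y, 'u) mem \<Rightarrow> 'p) \<Rightarrow> nat \<Rightarrow> nat \<Rightarrow> 'p \<Rightarrow> real" where
  "Vhk W U h0 h d \<sigma> T 0 = (\<lambda>p. 0)"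
| "Vhk W U h0 h d \<sigma> T (Suc k) = (\<lambda>p. INF u\<in>U (T - k).
      max (Sup (CcondPi W U h0 h d \<sigma> (T - k) p u))
          (SUP p'\<in>PinextPi W U h0 h \<sigma> (T - k) p u. Vhk W U h0 h d \<sigma> T k p'))"

definition Vhat :: "(nat \<Rightarrow> 'w set) \<Rightarrow> (nat \<Rightarrow> 'u set) \<Rightarrow> ('w \<Rightarrow> 'y)
    \<Rightarrow> (nat \<Rightarrow> 'w list \<Rightarrow> 'u list \<Rightarrow> 'y) \<Rightarrow> (nat \<Rightarrow> 'w list \<Rightarrow> 'u list \<Rightarrow> real)
    \<Rightarrow> (nat \<Rightarrow> ('y, 'u) mem \<Rightarrow> 'p) \<Rightarrow> nat \<Rightarrow> nat \<Rightarrow> 'p \<Rightarrow> real" where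
  "Vhat W U h0 h d \<sigma> T t = Vhk W U h0 h d \<sigma> T (Suc T - t)"

definition Qhat :: "(nat \<Rightarrow> 'w set) \<Rightarrow> (nat \<Rightarrow> 'u set) \<Rightarrow> ('w \<Rightarrow> 'y)
    \<Rightarrow> (nat \<Rightarrow> 'w list \<Rightarrow> 'u list \<Rightarrow> 'y) \<Rightarrow> (nat \<Rightarrow> 'w list \<Rightarrow> 'u list \<Rightarrow> real)
    \<Rightarrow> (nat \<Rightarrow> ('y, 'u) mem \<Rightarrow> 'p) \<Rightarrow> nat \<Rightarrow> nat \<Rightarrow> 'p \<Rightarrow> 'u \<Rightarrow> real" where
  "Qhat W U h0 h d \<sigma> T t p u = max (Sup (CcondPi W U h0 h d \<sigma> t p u))
      (SUP p'\<in>PinextPi W U h0 h \<sigma> t p u. Vhat W U h0 h d \<sigma> T (Suc t) p')"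

definition is_AIS :: "(nat \<Rightarrow> 'w set) \<Rightarrow> (nat \<Rightarrow> 'u set) \<Rightarrow> ('w \<Rightarrow> 'y)
    \<Rightarrow> (nat \<Rightarrow> 'w list \<Rightarrow> 'u list \<Rightarrow> 'y) \<Rightarrow> (nat \<Rightarrow> 'w list \<Rightarrow> 'u list \<Rightarrow> real)
    \<Rightarrow> (nat \<Rightarrow> ('y, 'u) mem \<Rightarrow> 'p::metric_space) \<Rightarrow> nat
    \<Rightarrow> (nat \<Rightarrow> real) \<Rightarrow> (nat \<Rightarrow> real) \<Rightarrow> (nat \<Rightarrow> real) \<Rightarrow> bool" where
  "is_AIS W U h0 h d \<sigma> T \<epsilon> \<delta> lam \<longleftrightarrow>
     (\<forall>t. bounded (Pirange W U h0 h \<sigma> t)) \<and>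
     (\<forall>t\<le>T. 0 \<le> \<epsilon> t \<and> 0 \<le> \<delta> t \<and> 0 \<le> lam t \<and>
        (\<forall>m\<in>Mrange W U h0 h t. \<forall>u\<in>U t.
           \<bar>Sup (Ccond W h0 h d t m u) - Sup (CcondPi W U h0 h d \<sigma> t (\<sigma> t m) u)\<bar> \<le> \<epsilon> t \<and>
           hausdorff (Pinext W h0 h \<sigma> t m u) (PinextPi W U h0 h \<sigma> t (\<sigma> t m) u) \<le> \<delta> t) \<and>
        (\<forall>u\<in>U t. \<forall>p1\<in>Pirange W U h0 h \<sigma> t. \<forall>p2\<in>Pirange W U h0 h \<sigma> t.
           hausdorff (PinextPi W U h0 h \<sigma> t p1 u) (PinextPi W U h0 h \<sigma> t p2 u) \<le> lam t * dist p1 p2))"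

end

theory Submission imports Defs begin

lemma bounded_dist_bound:
  assumes "bounded P" obtains e where "\<forall>x\<in>P. \<forall>y\<in>P. dist x y \<le> e"
proof -
  obtain a e where "\<forall>y\<in>P. dist a y \<le> e" using assms unfolding bounded_def by blast
  then have "\<forall>x\<in>P. \<forall>y\<in>P. dist x y \<le> 2*e"
  proof (intro ballI)
    fix x y assume "x \<in> P" "y \<in> P"
    then have "dist a x \<le> e" "dist a y \<le> e" using \<open>\<forall>y\<in>P. dist a y \<le> e\<close> by auto
    moreover have "dist x y \<le> dist x a + dist y a" by (rule dist_triangle2)
    ultimately show "dist x y \<le> 2*e" by (simp add: dist_commute)
  qed
  then show ?thesis using that by blast
qed

lemma lip_bdd:
  fixes f :: "'p::metric_space \<Rightarrow> real"
  assumes "bounded P" "L-lipschitz_on P f" "A \<subseteq> P"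
  shows "bdd_above (f ` A)" "bdd_below (f ` A)"
proof -
  obtain e where e: "\<forall>x\<in>P. \<forall>y\<in>P. dist x y \<le> e" using bounded_dist_bound[OF assms(1)] by blast
  have L0: "0 \<le> L" using lipschitz_on_nonneg[OF assms(2)] .
  have *: "\<bar>f x - f y\<bar> \<le> L * e" if "x \<in> P" "y \<in> P" for x y
  proof -
    have "dist (f x) (f y) \<le> L * dist x y" using lipschitz_onD[OF assms(2) that] .
    also have "\<dots> \<le> L * e" using e that L0 by (simp add: mult_left_mono)
    finally show ?thesis by (simp add: dist_real_def)
  qed
  show "bdd_above (f ` A)"
  proof (cases "A = {}")
    case False
    then obtain a0 where "a0 \<in> A" by blast
    show ?thesis
    proof (rule bdd_aboveI2)
      fix x assume "x \<in> A"
      then have "\<bar>f x - f a0\<bar> \<le> L * e" using * assms(3) \<open>a0 \<in> A\<close> by blast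
      then show "f x \<le> f a0 + L*e" by linarith
    qed
  qed simp
  show "bdd_below (f ` A)"
  proof (cases "A = {}")
    case False
    then obtain a0 where "a0 \<in> A" by blast
    show ?thesis
    proof (rule bdd_belowI2)
      fix x assume "x \<in> A"
      then have "\<bar>f x - f a0\<bar> \<le> L * e" using * assms(3) \<open>a0 \<in> A\<close> by blast
      then show "f a0 - L*e \<le> f x" by linarith
    qed
  qed simp
qed

lemma haus_sup1:
  fixes f :: "'p::metric_space \<Rightarrow> real"
  assumes AP: "A \<subseteq> P" and BP: "B \<subseteq> P" and Ane: "A \<noteq> {}" and Bne: "B \<noteq> {}"
    and bP: "bounded P" and lip: "L-lipschitz_on P f" and hd: "hausdorff A B \<le> \<delta>"
  shows "Sup (f ` A) \<le> Sup (f ` B) + L * \<delta>"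
proof -
  obtain e where e: "\<forall>x\<in>P. \<forall>y\<in>P. dist x y \<le> e" using bounded_dist_bound[OF bP] by blast
  have L0: "0 \<le> L" using lipschitz_on_nonneg[OF lip] .
  have bB: "bdd_above (f ` B)" using lip_bdd[OF bP lip BP] by blast
  obtain b0 where b0: "b0 \<in> B" using Bne by blast
  have bdi: "bdd_above ((\<lambda>a. infdist a B) ` A)"
  proof (rule bdd_aboveI2)
    fix a assume "a \<in> A"
    then have "infdist a B \<le> dist a b0" "dist a b0 \<le> e" using b0 e AP BP infdist_le by auto
    then show "infdist a B \<le> e" by linarith
  qed
  have idl: "infdist a B \<le> \<delta>" if a: "a \<in> A" for a
  proof -
    have "infdist a B \<le> (SUP a\<in>A. infdist a B)" using cSUP_upper[OF a bdi] .
    also have "\<dots> \<le> hausdorff A B" unfolding hausdorff_def by simp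
    finally show ?thesis using hd by simp
  qed
  have key: "f a \<le> Sup (f ` B) + L * \<delta>" if a: "a \<in> A" for a
  proof -
    have fb: "f a \<le> Sup (f ` B) + L * dist a b" if b: "b \<in> B" for b
    proof -
      have "dist (f a) (f b) \<le> L * dist a b" using lipschitz_onD[OF lip] a b AP BP by blast
      moreover have "f b \<le> Sup (f ` B)" using cSUP_upper[OF b bB] .
      ultimately show ?thesis by (simp add: dist_real_def)
    qed
    have "f a - Sup (f ` B) \<le> L * infdist a B"
    proof (cases "L = 0")
      case True
      then show ?thesis using fb[OF b0] by simp
    next
      case False
      then have Lp: "L > 0" using L0 by simp
      have "(f a - Sup (f ` B)) / L \<le> infdist a B"
        unfolding infdist_notempty[OF Bne]
      proof (rule cINF_greatest[OF Bne])
        fix b assume "b \<in> B"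
        then show "(f a - Sup (f ` B)) / L \<le> dist a b" using fb[of b] Lp
          by (simp add: divide_le_eq mult.commute)
      qed
      then show ?thesis using Lp by (simp add: divide_le_eq mult.commute)
    qed
    also have "\<dots> \<le> L * \<delta>" using idl[OF a] L0 by (simp add: mult_left_mono)
    finally show ?thesis by simp
  qed
  show ?thesis using Ane key by (intro cSUP_least) auto
qed

lemma haus_sup:
  fixes f :: "'p::metric_space \<Rightarrow> real"
  assumes AP: "A \<subseteq> P" and BP: "B \<subseteq> P" and Ane: "A \<noteq> {}" and Bne: "B \<noteq> {}"
    and bP: "bounded P" and lip: "L-lipschitz_on P f" and hd: "hausdorff A B \<le> \<delta>"
  shows "\<bar>Sup (f ` A) - Sup (f ` B)\<bar> \<le> L * \<delta>"
proof -
  have hd2: "hausdorff B A \<le> \<delta>" using hd unfolding hausdorff_def by (simp add: max.commute)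
  show ?thesis using haus_sup1[OF AP BP Ane Bne bP lip hd] haus_sup1[OF BP AP Bne Ane bP lip hd2]
    by linarith
qed

lemma max_diff: "\<bar>max (a::real) b - max c d\<bar> \<le> max \<bar>a - c\<bar> \<bar>b - d\<bar>"
  by (simp add: max_def abs_if) 

lemma sup_diff:
  fixes f g :: "'a \<Rightarrow> real"
  assumes ne: "A \<noteq> {}" and cl: "\<And>x. x \<in> A \<Longrightarrow> \<bar>f x - g x\<bar> \<le> c" and bg: "bdd_above (g ` A)"
  shows "\<bar>Sup (f ` A) - Sup (g ` A)\<bar> \<le> c"
proof -
  obtain M where M: "\<And>x. x \<in> A \<Longrightarrow> g x \<le> M" using bg by (auto simp: bdd_above_def)
  have bf: "bdd_above (f ` A)"
  proof (rule bdd_aboveI2)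
    fix x assume "x \<in> A" then show "f x \<le> M + c" using M[of x] cl[of x] by linarith
  qed
  have "Sup (f ` A) \<le> Sup (g ` A) + c"
  proof (rule cSUP_least[OF ne])
    fix x assume x: "x \<in> A" show "f x \<le> Sup (g ` A) + c" using cSUP_upper[OF x bg] cl[OF x] by linarith
  qed
  moreover have "Sup (g ` A) \<le> Sup (f ` A) + c"
  proof (rule cSUP_least[OF ne])
    fix x assume x: "x \<in> A" show "g x \<le> Sup (f ` A) + c" using cSUP_upper[OF x bf] cl[OF x] by linarith
  qed
  ultimately show ?thesis by linarith
qed

lemma inf_diff:
  fixes f g :: "'a \<Rightarrow> real"
  assumes ne: "A \<noteq> {}" and cl: "\<And>x. x \<in> A \<Longrightarrow> \<bar>f x - g x\<bar> \<le> c"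
    and bf: "bdd_below (f ` A)" and bg: "bdd_below (g ` A)"
  shows "\<bar>Inf (f ` A) - Inf (g ` A)\<bar> \<le> c"
proof -
  have "Inf (f ` A) - c \<le> Inf (g ` A)"
  proof (rule cINF_greatest[OF ne])
    fix x assume x: "x \<in> A" show "Inf (f ` A) - c \<le> g x" using cINF_lower[OF bf x] cl[OF x] by linarith
  qed
  moreover have "Inf (g ` A) - c \<le> Inf (f ` A)"
  proof (rule cINF_greatest[OF ne])
    fix x assume x: "x \<in> A" show "Inf (g ` A) - c \<le> f x" using cINF_lower[OF bg x] cl[OF x] by linarith
  qed
  ultimately show ?thesis by linarith
qed

lemma Mnext_sub:
  assumes Wne: "\<And>t. W t \<noteq> {}" and m: "m \<in> Mrange W U h0 h t" and u: "u \<in> U t"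
  shows "Mnext W h0 h t m u \<subseteq> Mrange W U h0 h (Suc t)"
proof
  fix m' assume "m' \<in> Mnext W h0 h t m u"
  then obtain w where w: "w \<in> Wm W h0 h m" and m': "m' = (fst m @ [h (Suc t) w (snd m @ [u])], snd m @ [u])"
    unfolding Mnext_def Ycond_def by auto
  obtain w0 where w0: "w0 \<in> W (Suc t)" using Wne by blast
  have lf: "length (fst m) = Suc t" and ls: "length (snd m) = t" and us: "\<forall>l<t. snd m ! l \<in> U l"
    using m unfolding Mrange_def by auto
  have lw: "length w = Suc t" and wW: "\<forall>l<length w. w ! l \<in> W l" and w00: "fst m ! 0 = h0 (w ! 0)"
    and wh: "\<forall>l. 0 < l \<and> l < length w \<longrightarrow> fst m ! l = h l (take l w) (take l (snd m))"
    using w lf unfolding Wm_def by auto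
  have "w @ [w0] \<in> Wm W h0 h m'"
    unfolding Wm_def m' fst_conv snd_conv
  proof (intro CollectI conjI allI impI)
    show "length (w @ [w0]) = length (fst m @ [h (Suc t) w (snd m @ [u])])" using lw lf by simp
  next
    fix l assume "l < length (w @ [w0])"
    then show "(w @ [w0]) ! l \<in> W l" using wW w0 lw by (auto simp: nth_append less_Suc_eq)
  next
    show "(fst m @ [h (Suc t) w (snd m @ [u])]) ! 0 = h0 ((w @ [w0]) ! 0)"
      using w00 lw lf by (simp add: nth_append)
  next
    fix l assume l: "0 < l \<and> l < length (w @ [w0])"
    show "(fst m @ [h (Suc t) w (snd m @ [u])]) ! l = h l (take l (w @ [w0])) (take l (snd m @ [u]))"
    proof (cases "l < Suc t")
      case True
      then show ?thesis using wh l lw lf ls by (simp add: nth_append take_append)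
    next
      case False
      then have "l = Suc t" using l lw by simp
      then show ?thesis using lw lf ls by (simp add: nth_append)
    qed
  qed
  then show "m' \<in> Mrange W U h0 h (Suc t)"
    unfolding Mrange_def m' using lf ls us u by (auto simp: nth_append less_Suc_eq)
qed

lemma Mnext_ne:
  assumes m: "m \<in> Mrange W U h0 h t"
  shows "Mnext W h0 h t m u \<noteq> {}"
  using m unfolding Mrange_def Mnext_def Ycond_def by auto

lemma Ccond_bd:
  assumes B: "\<forall>w us. length w = Suc t \<and> length us = Suc t
          \<and> (\<forall>l\<le>t. w ! l \<in> W l \<and> us ! l \<in> U l) \<longrightarrow> 0 \<le> d t w us \<and> d t w us \<le> Bt"
    and m: "m \<in> Mrange W U h0 h t" and u: "u \<in> U t"
  shows "Ccond W h0 h d t m u \<noteq> {}" "\<forall>c\<in>Ccond W h0 h d t m u. 0 \<le> c \<and> c \<le> Bt"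
proof -
  show "Ccond W h0 h d t m u \<noteq> {}" using m unfolding Mrange_def Ccond_def by auto
  have lf: "length (fst m) = Suc t" and ls: "length (snd m) = t" and us: "\<forall>l<t. snd m ! l \<in> U l"
    using m unfolding Mrange_def by auto
  show "\<forall>c\<in>Ccond W h0 h d t m u. 0 \<le> c \<and> c \<le> Bt"
  proof
    fix c assume "c \<in> Ccond W h0 h d t m u"
    then obtain w where w: "w \<in> Wm W h0 h m" and c: "c = d t w (snd m @ [u])"
      unfolding Ccond_def by auto
    have lw: "length w = Suc t" and wW: "\<forall>l<length w. w ! l \<in> W l"
      using w lf unfolding Wm_def by auto
    have "\<forall>l\<le>t. w ! l \<in> W l \<and> (snd m @ [u]) ! l \<in> U l"
      using lw wW us ls u by (auto simp: nth_append less_Suc_eq_le[symmetric] less_Suc_eq)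
    then show "0 \<le> c \<and> c \<le> Bt" using B lw ls c by simp
  qed
qed

theorem theorem3:
  fixes W :: "nat \<Rightarrow> 'w set" and U :: "nat \<Rightarrow> 'u set"
    and h0 :: "'w \<Rightarrow> 'y" and h :: "nat \<Rightarrow> 'w list \<Rightarrow> 'u list \<Rightarrow> 'y"
    and d :: "nat \<Rightarrow> 'w list \<Rightarrow> 'u list \<Rightarrow> real"
    and \<sigma> :: "nat \<Rightarrow> ('y, 'u) mem \<Rightarrow> 'p::metric_space"
    and T :: nat and \<epsilon> \<delta> lam L \<alpha> :: "nat \<Rightarrow> real"
  assumes W_ne: "\<And>t. W t \<noteq> {}"
    and U_ne: "\<And>t. U t \<noteq> {}"
    and cost_bounded: "\<And>t. \<exists>B. \<forall>w us. length w = Suc t \<and> length us = Suc t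
          \<and> (\<forall>l\<le>t. w ! l \<in> W l \<and> us ! l \<in> U l) \<longrightarrow> 0 \<le> d t w us \<and> d t w us \<le> B"
    and AIS: "is_AIS W U h0 h d \<sigma> T \<epsilon> \<delta> lam"
    and L_last: "L (Suc T) = 0"
    and L_lip: "\<And>t. t \<le> T \<Longrightarrow>
          (L (Suc t))-lipschitz_on (Pirange W U h0 h \<sigma> (Suc t)) (Vhat W U h0 h d \<sigma> T (Suc t))"
    and alpha_last: "\<alpha> (Suc T) = 0"
    and alpha_rec: "\<And>t. t \<le> T \<Longrightarrow> \<alpha> t = max (\<epsilon> t) (\<alpha> (Suc t) + L (Suc t) * \<delta> t)"
  shows "\<forall>t\<le>T. \<forall>m\<in>Mrange W U h0 h t. \<forall>u\<in>U t.
           \<bar>Qfun W U h0 h d T t m u - Qhat W U h0 h d \<sigma> T t (\<sigma> t m) u\<bar> \<le> \<alpha> t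
         \<and> \<bar>Vfun W U h0 h d T t m - Vhat W U h0 h d \<sigma> T t (\<sigma> t m)\<bar> \<le> \<alpha> t"
proof -
  obtain B where B: "\<And>t. \<forall>w us. length w = Suc t \<and> length us = Suc t
          \<and> (\<forall>l\<le>t. w ! l \<in> W l \<and> us ! l \<in> U l) \<longrightarrow> 0 \<le> d t w us \<and> d t w us \<le> B t"
    using cost_bounded by metis
  have bP: "\<And>t. bounded (Pirange W U h0 h \<sigma> t)" using AIS unfolding is_AIS_def by blast
  have AIS12: "\<And>t m u. t \<le> T \<Longrightarrow> m \<in> Mrange W U h0 h t \<Longrightarrow> u \<in> U t \<Longrightarrow>
           \<bar>Sup (Ccond W h0 h d t m u) - Sup (CcondPi W U h0 h d \<sigma> t (\<sigma> t m) u)\<bar> \<le> \<epsilon> t \<and>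
           hausdorff (Pinext W h0 h \<sigma> t m u) (PinextPi W U h0 h \<sigma> t (\<sigma> t m) u) \<le> \<delta> t"
    using AIS unfolding is_AIS_def by blast
  have Vfun_unf: "\<And>t m. t \<le> T \<Longrightarrow> Vfun W U h0 h d T t m = (INF u\<in>U t. Qfun W U h0 h d T t m u)"
  proof -
    fix t m assume t: "t \<le> T"
    then have e: "Suc T - t = Suc (T - t)" "T - (T - t) = t" "Suc T - Suc t = T - t" by auto
    show "Vfun W U h0 h d T t m = (INF u\<in>U t. Qfun W U h0 h d T t m u)"
      unfolding Vfun_def Qfun_def e(1,3) by (simp add: e(2))
  qed
  have Vhat_unf: "\<And>t p. t \<le> T \<Longrightarrow> Vhat W U h0 h d \<sigma> T t p = (INF u\<in>U t. Qhat W U h0 h d \<sigma> T t p u)"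
  proof -
    fix t p assume t: "t \<le> T"
    then have e: "Suc T - t = Suc (T - t)" "T - (T - t) = t" "Suc T - Suc t = T - t" by auto
    show "Vhat W U h0 h d \<sigma> T t p = (INF u\<in>U t. Qhat W U h0 h d \<sigma> T t p u)"
      unfolding Vhat_def Qhat_def e(1,3) by (simp add: e(2))
  qed
  have CPi: "CcondPi W U h0 h d \<sigma> t (\<sigma> t m) u \<noteq> {} \<and>
      (\<forall>c\<in>CcondPi W U h0 h d \<sigma> t (\<sigma> t m) u. 0 \<le> c \<and> c \<le> B t)"
    if m: "m \<in> Mrange W U h0 h t" and u: "u \<in> U t" for t m u
  proof -
    have "m \<in> Mofpi W U h0 h \<sigma> t (\<sigma> t m)" using m unfolding Mofpi_def by simp
    moreover have "\<forall>m'\<in>Mofpi W U h0 h \<sigma> t (\<sigma> t m). \<forall>c\<in>Ccond W h0 h d t m' u. 0 \<le> c \<and> c \<le> B t"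
      using Ccond_bd(2)[where W=W and U=U and d=d and t=t, OF B[of t] _ u] unfolding Mofpi_def by blast
    ultimately show ?thesis using Ccond_bd(1)[where W=W and U=U and d=d and t=t, OF B[of t] m u] unfolding CcondPi_def by blast
  qed
  have supC0: "0 \<le> Sup C" if Cne: "C \<noteq> {}" and Cb: "\<forall>c\<in>C. 0 \<le> c \<and> c \<le> b" for C and b :: real
  proof -
    obtain c where c: "c \<in> C" using Cne by blast
    have "bdd_above C" using Cb by (auto simp: bdd_above_def)
    then show ?thesis using cSup_upper[OF c] c Cb by force
  qed
  have Qstep: "\<bar>Qfun W U h0 h d T t m u - Qhat W U h0 h d \<sigma> T t (\<sigma> t m) u\<bar> \<le> \<alpha> t"
    if t: "t \<le> T" and IH: "\<forall>m'\<in>Mrange W U h0 h (Suc t).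
       \<bar>Vfun W U h0 h d T (Suc t) m' - Vhat W U h0 h d \<sigma> T (Suc t) (\<sigma> (Suc t) m')\<bar> \<le> \<alpha> (Suc t)"
      and m: "m \<in> Mrange W U h0 h t" and u: "u \<in> U t" for t m u
  proof -
    define f where "f = Vhat W U h0 h d \<sigma> T (Suc t)"
    define P where "P = Pirange W U h0 h \<sigma> (Suc t)"
    define Mn where "Mn = Mnext W h0 h t m u"
    have MnR: "Mn \<subseteq> Mrange W U h0 h (Suc t)" unfolding Mn_def using Mnext_sub[where W=W and U=U and t=t, OF W_ne m u] .
    have Mnne: "Mn \<noteq> {}" unfolding Mn_def using Mnext_ne[OF m] .
    have lip: "(L (Suc t))-lipschitz_on P f" unfolding P_def f_def using L_lip[OF t] .
    have PnP: "Pinext W h0 h \<sigma> t m u \<subseteq> P"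
      unfolding P_def Pinext_def Pirange_def using MnR Mn_def by auto
    have PPiP: "PinextPi W U h0 h \<sigma> t (\<sigma> t m) u \<subseteq> P"
      unfolding P_def PinextPi_def Pinext_def Pirange_def Mofpi_def
      using Mnext_sub[where W=W and U=U and t=t, OF W_ne _ u] by blast
    have Pnne: "Pinext W h0 h \<sigma> t m u \<noteq> {}" unfolding Pinext_def using Mnne Mn_def by auto
    have PPine: "PinextPi W U h0 h \<sigma> t (\<sigma> t m) u \<noteq> {}"
      using Pnne m unfolding PinextPi_def Mofpi_def by blast
    have bdd1: "bdd_above ((\<lambda>m'. f (\<sigma> (Suc t) m')) ` Mn)"
    proof -
      have "\<sigma> (Suc t) ` Mn \<subseteq> P" unfolding P_def Pirange_def using MnR by auto
      from lip_bdd(1)[OF bP[of "Suc t", folded P_def] lip this] show ?thesis by (simp add: image_image)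
    qed
    have s1: "\<bar>(SUP m'\<in>Mn. Vfun W U h0 h d T (Suc t) m') - (SUP m'\<in>Mn. f (\<sigma> (Suc t) m'))\<bar> \<le> \<alpha> (Suc t)"
      using sup_diff[OF Mnne _ bdd1] IH MnR unfolding f_def by blast
    have e2: "(SUP m'\<in>Mn. f (\<sigma> (Suc t) m')) = Sup (f ` Pinext W h0 h \<sigma> t m u)"
      unfolding Pinext_def Mn_def by (simp add: image_image)
    have s2: "\<bar>Sup (f ` Pinext W h0 h \<sigma> t m u) - Sup (f ` PinextPi W U h0 h \<sigma> t (\<sigma> t m) u)\<bar>
        \<le> L (Suc t) * \<delta> t"
      using haus_sup[OF PnP PPiP Pnne PPine bP[of "Suc t", folded P_def] lip] AIS12[OF t m u] by blast
    have s12: "\<bar>(SUP m'\<in>Mn. Vfun W U h0 h d T (Suc t) m') - Sup (f ` PinextPi W U h0 h \<sigma> t (\<sigma> t m) u)\<bar>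
        \<le> \<alpha> t" using s1 s2 e2 alpha_rec[OF t] by linarith
    have s0: "\<bar>Sup (Ccond W h0 h d t m u) - Sup (CcondPi W U h0 h d \<sigma> t (\<sigma> t m) u)\<bar> \<le> \<alpha> t"
      using AIS12[OF t m u] alpha_rec[OF t] by linarith
    have "\<bar>Qfun W U h0 h d T t m u - Qhat W U h0 h d \<sigma> T t (\<sigma> t m) u\<bar>
       \<le> max \<bar>Sup (Ccond W h0 h d t m u) - Sup (CcondPi W U h0 h d \<sigma> t (\<sigma> t m) u)\<bar>
              \<bar>(SUP m'\<in>Mn. Vfun W U h0 h d T (Suc t) m') - Sup (f ` PinextPi W U h0 h \<sigma> t (\<sigma> t m) u)\<bar>"
      unfolding Qfun_def Qhat_def Mn_def f_def by (rule max_diff)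
    also have "\<dots> \<le> \<alpha> t" using s0 s12 by simp
    finally show ?thesis .
  qed
  have Vstep: "\<bar>Vfun W U h0 h d T t m - Vhat W U h0 h d \<sigma> T t (\<sigma> t m)\<bar> \<le> \<alpha> t"
    if t: "t \<le> T" and Q: "\<forall>u\<in>U t. \<bar>Qfun W U h0 h d T t m u - Qhat W U h0 h d \<sigma> T t (\<sigma> t m) u\<bar> \<le> \<alpha> t"
      and m: "m \<in> Mrange W U h0 h t" for t m
  proof -
    have b1: "bdd_below ((\<lambda>u. Qfun W U h0 h d T t m u) ` U t)"
    proof (rule bdd_belowI2)
      fix u assume u: "u \<in> U t"
      have "0 \<le> Sup (Ccond W h0 h d t m u)" using supC0 Ccond_bd[where W=W and U=U and d=d and t=t, OF B[of t] m u] by blast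
      then show "0 \<le> Qfun W U h0 h d T t m u" unfolding Qfun_def by simp
    qed
    have b2: "bdd_below ((\<lambda>u. Qhat W U h0 h d \<sigma> T t (\<sigma> t m) u) ` U t)"
    proof (rule bdd_belowI2)
      fix u assume u: "u \<in> U t"
      have "0 \<le> Sup (CcondPi W U h0 h d \<sigma> t (\<sigma> t m) u)" using supC0 CPi[OF m u] by blast
      then show "0 \<le> Qhat W U h0 h d \<sigma> T t (\<sigma> t m) u" unfolding Qhat_def by simp
    qed
    show ?thesis unfolding Vfun_unf[OF t] Vhat_unf[OF t]
      using inf_diff[OF U_ne _ b1 b2] Q by blast
  qed
  have main: "\<forall>m\<in>Mrange W U h0 h (Suc T - k).
       \<bar>Vfun W U h0 h d T (Suc T - k) m - Vhat W U h0 h d \<sigma> T (Suc T - k) (\<sigma> (Suc T - k) m)\<bar> \<le> \<alpha> (Suc T - k)"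
    if "k \<le> Suc T" for k
    using that
  proof (induction k)
    case 0
    then show ?case by (simp add: Vfun_def Vhat_def alpha_last)
  next
    case (Suc k)
    define t where "t = T - k"
    have t: "t \<le> T" and e: "Suc T - Suc k = t" "Suc T - k = Suc t" using Suc.prems unfolding t_def by auto
    have IH: "\<forall>m'\<in>Mrange W U h0 h (Suc t).
       \<bar>Vfun W U h0 h d T (Suc t) m' - Vhat W U h0 h d \<sigma> T (Suc t) (\<sigma> (Suc t) m')\<bar> \<le> \<alpha> (Suc t)"
      using Suc.IH Suc.prems e by simp
    show ?case unfolding e using Vstep[OF t] Qstep[OF t IH] by blast
  qed
  show ?thesis
  proof (intro allI impI ballI conjI)
    fix t m u assume t: "t \<le> T" and m: "m \<in> Mrange W U h0 h t" and u: "u \<in> U t"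
    have IH: "\<forall>m'\<in>Mrange W U h0 h (Suc t).
       \<bar>Vfun W U h0 h d T (Suc t) m' - Vhat W U h0 h d \<sigma> T (Suc t) (\<sigma> (Suc t) m')\<bar> \<le> \<alpha> (Suc t)"
      using main[of "T - t"] t by (simp add: Suc_diff_le)
    show "\<bar>Qfun W U h0 h d T t m u - Qhat W U h0 h d \<sigma> T t (\<sigma> t m) u\<bar> \<le> \<alpha> t"
      using Qstep[OF t IH m u] .
    show "\<bar>Vfun W U h0 h d T t m - Vhat W U h0 h d \<sigma> T t (\<sigma> t m)\<bar> \<le> \<alpha> t"
      using Vstep[OF t _ m] Qstep[OF t IH m] by blast
  qed
qed

end
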